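(* For every integer $n\ge2$, \[ \sum_{j=0}^{n}\frac{B_j}{n-j+1}=1-(n+1)\sum_{k=1}^{n}{n\brace k}c_kH_k . \]
   Context: $B_j$ is the $j$th Bernoulli number ($\frac{t}{e^t-1}=\sum_{m\ge0}B_m\frac{t^m}{m!}$). ${n\brace k}$ is the Stirling number of the second kind, $H_k=\sum_{i=1}^k1/i$. The Cauchy numbers of the first kind are $c_k=k!\int_0^1\binom{x}{k}dx=\int_0^1x(x-1)\cdots(x-k+1)\,dx$. *)

theory Defs
  imports "HOL-Analysis.Analysis" "HOL-Combinatorics.Stirling"
    "HOL-Computational_Algebra.Formal_Power_Series"
begin

definition bernoulli_num :: "nat \<Rightarrow> real" where
  "bernoulli_num m = fact m * fps_nth (fps_X / (fps_exp 1 - 1)) m"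

definition cauchy1 :: "nat \<Rightarrow> real" where
  "cauchy1 k = integral {0..1} (\<lambda>x::real. \<Prod>i<k. (x - real i))"

end

theory Submission
  imports Defs "HOL-Computational_Algebra.Polynomial"
begin


definition BA :: "real fps" where "BA = fps_X / (fps_exp 1 - 1)"

lemma BA_mult: "BA * (fps_exp 1 - 1) = fps_X"
proof -
  have ne: "(fps_exp 1 - 1 :: real fps) \<noteq> 0"
  proof
    assume "(fps_exp 1 - 1 :: real fps) = 0"
    hence "fps_nth (fps_exp 1 - 1 :: real fps) 1 = 0" by simp
    thus False by simp
  qed
  have sd: "subdegree (fps_exp 1 - 1 :: real fps) = 1"
    by (rule subdegreeI) auto
  show ?thesis unfolding BA_def
    by (rule fps_times_divide_eq[OF ne]) (unfold sd, simp)
qed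

lemma bern_nth: "fps_nth BA m = bernoulli_num m / fact m"
  by (simp add: bernoulli_num_def BA_def)

lemma bern0: "bernoulli_num 0 = 1"
proof -
  have "fps_nth (BA * (fps_exp 1 - 1)) 1 = 1" using BA_mult by simp
  hence "fps_nth BA 0 = 1" by (simp add: fps_mult_nth)
  thus ?thesis by (simp add: bern_nth)
qed

lemma bern_rec: assumes "m \<ge> 1"
  shows "(\<Sum>j\<le>m. real (Suc m choose j) * bernoulli_num j) = 0"
proof -
  have "fps_nth (BA * (fps_exp 1 - 1)) (Suc m) = 0" using BA_mult assms by simp
  hence "(\<Sum>i=0..Suc m. fps_nth BA i * fps_nth (fps_exp 1 - 1 :: real fps) (Suc m - i)) = 0"
    by (simp add: fps_mult_nth)
  hence "(\<Sum>i\<le>m. fps_nth BA i * (1 / fact (Suc m - i))) = 0"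
    by (simp add: atLeast0AtMost sum.atMost_Suc Suc_diff_le)
  hence "fact (Suc m) * (\<Sum>i\<le>m. fps_nth BA i * (1 / fact (Suc m - i))) = 0" by simp
  moreover have "fact (Suc m) * (\<Sum>i\<le>m. fps_nth BA i * (1 / fact (Suc m - i))) =
     (\<Sum>j\<le>m. real (Suc m choose j) * bernoulli_num j)"
    unfolding sum_distrib_left
  proof (rule sum.cong[OF refl])
    fix j assume "j \<in> {..m}"
    hence j: "j \<le> Suc m" by simp
    show "fact (Suc m) * (fps_nth BA j * (1 / fact (Suc m - j))) = real (Suc m choose j) * bernoulli_num j"
      by (simp add: bern_nth binomial_fact[OF j] field_simps)
  qed
  ultimately show ?thesis by simp
qed


definition bpoly :: "nat \<Rightarrow> real \<Rightarrow> real" where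
  "bpoly m x = (\<Sum>j\<le>m. real (m choose j) * bernoulli_num j * x ^ (m - j))"

lemma bpoly_fps: "fps_nth (BA * fps_exp x) m = bpoly m x / fact m"
proof -
  have "fps_nth (BA * fps_exp x) m = (\<Sum>j\<le>m. bernoulli_num j / fact j * (x ^ (m - j) / fact (m - j)))"
    by (simp add: fps_mult_nth bern_nth atLeast0AtMost)
  also have "\<dots> = (\<Sum>j\<le>m. real (m choose j) * bernoulli_num j * x ^ (m - j)) / fact m"
    unfolding sum_divide_distrib
  proof (rule sum.cong[OF refl])
    fix j assume "j \<in> {..m}"
    hence j: "j \<le> m" by simp
    show "bernoulli_num j / fact j * (x ^ (m - j) / fact (m - j)) =
        real (m choose j) * bernoulli_num j * x ^ (m - j) / fact m"
      by (simp add: binomial_fact[OF j] field_simps)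
  qed
  finally show ?thesis by (simp add: bpoly_def)
qed

lemma bpoly_diff: "bpoly (Suc n) (x + 1) - bpoly (Suc n) x = real (Suc n) * x ^ n"
proof -
  have "BA * fps_exp (x + 1) - BA * fps_exp x = (BA * (fps_exp 1 - 1)) * fps_exp x"
    by (simp add: fps_exp_add_mult algebra_simps)
  also have "\<dots> = fps_X * fps_exp x" by (simp add: BA_mult)
  finally have e: "BA * fps_exp (x + 1) - BA * fps_exp x = fps_X * fps_exp x" .
  have "fps_nth (BA * fps_exp (x + 1) - BA * fps_exp x) (Suc n) = fps_nth (fps_X * fps_exp x) (Suc n)"
    by (simp only: e)
  hence "bpoly (Suc n) (x + 1) / fact (Suc n) - bpoly (Suc n) x / fact (Suc n) = x ^ n / fact n"
    by (simp add: bpoly_fps)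
  hence "(bpoly (Suc n) (x + 1) - bpoly (Suc n) x) / fact (Suc n) = x ^ n / fact n"
    by (simp add: diff_divide_distrib)
  hence "bpoly (Suc n) (x + 1) - bpoly (Suc n) x = x ^ n / fact n * fact (Suc n)"
    by (simp add: divide_eq_eq)
  also have "\<dots> = real (Suc n) * x ^ n" by (simp add: fact_Suc)
  finally show ?thesis .
qed

definition ff :: "real \<Rightarrow> nat \<Rightarrow> real" where
  "ff x k = (\<Prod>i<k. (x - real i))"

lemma ff_0[simp]: "ff x 0 = 1" by (simp add: ff_def)
lemma ff_Suc: "ff x (Suc k) = ff x k * (x - real k)" by (simp add: ff_def)
lemma ff_Suc_shift: "ff (x + 1) (Suc k) = (x + 1) * ff x k"
  unfolding ff_def prod.lessThan_Suc_shift by simp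
lemma ff_zero_Suc[simp]: "ff 0 (Suc k) = 0"
  unfolding ff_def prod.lessThan_Suc_shift by simp

lemma stirling_ff: "(\<Sum>k\<le>n. real (Stirling n k) * ff x k) = x ^ n"
proof (induction n)
  case 0 thus ?case by simp
next
  case (Suc n)
  have "(\<Sum>k\<le>Suc n. real (Stirling (Suc n) k) * ff x k)
      = (\<Sum>k\<le>n. real (Stirling (Suc n) (Suc k)) * ff x (Suc k))"
    by (simp only: sum.atMost_Suc_shift) simp
  also have "\<dots> = (\<Sum>k\<le>n. real (Suc k) * real (Stirling n (Suc k)) * ff x (Suc k))
        + (\<Sum>k\<le>n. real (Stirling n k) * ff x (Suc k))"
    by (simp add: sum.distrib algebra_simps)
  also have "(\<Sum>k\<le>n. real (Suc k) * real (Stirling n (Suc k)) * ff x (Suc k))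
      = (\<Sum>k\<le>Suc n. real k * real (Stirling n k) * ff x k)"
    by (simp only: sum.atMost_Suc_shift)
  also have "\<dots> = (\<Sum>k\<le>n. real k * real (Stirling n k) * ff x k)"
    by simp
  also have "(\<Sum>k\<le>n. real k * real (Stirling n k) * ff x k) + (\<Sum>k\<le>n. real (Stirling n k) * ff x (Suc k))
     = (\<Sum>k\<le>n. x * (real (Stirling n k) * ff x k))"
    by (simp add: sum.distrib[symmetric] ff_Suc algebra_simps)
  also have "\<dots> = x ^ Suc n" by (simp add: sum_distrib_left[symmetric] Suc.IH)
  finally show ?case .
qed

definition Q :: "nat \<Rightarrow> real \<Rightarrow> real" where
  "Q n x = (\<Sum>k\<le>n. real (Stirling n k) * ff x (Suc k) / real (Suc k))"

lemma Q_diff: "Q n (x + 1) - Q n x = x ^ n"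
proof -
  have "Q n (x + 1) - Q n x = (\<Sum>k\<le>n. real (Stirling n k) * ff x k)"
    unfolding Q_def sum_subtractf[symmetric]
  proof (rule sum.cong[OF refl])
    fix k
    show "real (Stirling n k) * ff (x + 1) (Suc k) / real (Suc k) - real (Stirling n k) * ff x (Suc k) / real (Suc k) =
         real (Stirling n k) * ff x k"
    proof -
      have "real (Stirling n k) * ((x + 1) * ff x k) - real (Stirling n k) * (ff x k * (x - real k))
          = (real (Stirling n k) * ff x k) * real (Suc k)" by (simp add: algebra_simps)
      thus ?thesis unfolding ff_Suc_shift ff_Suc[of x k] diff_divide_distrib[symmetric] by simp
    qed
  qed
  thus ?thesis by (simp add: stirling_ff)
qed

lemma Q_0: "Q n 0 = 0" by (simp add: Q_def)



definition F :: "nat \<Rightarrow> real \<Rightarrow> real" where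
  "F n x = (bpoly (Suc n) x - bpoly (Suc n) 0) / real (Suc n)"

lemma F_diff: "F n (x + 1) - F n x = x ^ n"
proof -
  have "F n (x + 1) - F n x = (bpoly (Suc n) (x + 1) - bpoly (Suc n) x) / real (Suc n)"
    by (simp add: F_def diff_divide_distrib)
  also have "\<dots> = x ^ n" by (simp only: bpoly_diff) simp
  finally show ?thesis .
qed

lemma F_0: "F n 0 = 0" by (simp add: F_def)

lemma QF_nat: "Q n (real m) - F n (real m) = 0"
proof (induction m)
  case 0 thus ?case by (simp add: Q_0 F_0)
next
  case (Suc m)
  have "Q n (real m + 1) - F n (real m + 1) = Q n (real m) - F n (real m)"
    using Q_diff[of n "real m"] F_diff[of n "real m"] by simp
  thus ?case using Suc.IH by (simp add: add.commute)
qed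

lemma QF_poly: "\<exists>p. \<forall>x. poly p x = Q n x - F n x"
proof -
  define p where "p = (\<Sum>k\<le>n. smult (real (Stirling n k) / real (Suc k)) (\<Prod>i<Suc k. [:- real i, 1:]))
     - smult (1 / real (Suc n)) ((\<Sum>j\<le>Suc n. smult (real (Suc n choose j) * bernoulli_num j) ([:0, 1:] ^ (Suc n - j))) - [:bpoly (Suc n) 0:])"
  have "poly p x = Q n x - F n x" for x
    by (simp add: p_def poly_sum poly_prod Q_def F_def bpoly_def ff_def diff_divide_distrib algebra_simps)
  thus ?thesis by blast
qed

lemma Q_eq_F: "Q n x = F n x"
proof -
  obtain p where p: "\<And>x. poly p x = Q n x - F n x" using QF_poly by blast
  have "p = 0"
  proof (rule ccontr)
    assume "p \<noteq> 0"
    hence fin: "finite {x. poly p x = 0}" by (rule poly_roots_finite)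
    have "range real \<subseteq> {x. poly p x = 0}" using QF_nat p by auto
    hence "finite (range real)" using fin finite_subset by blast
    moreover have "infinite (range real)"
      using range_inj_infinite[of real] inj_on_def by auto
    ultimately show False by blast
  qed
  thus ?thesis using p[of x] by simp
qed



definition P :: "nat \<Rightarrow> real \<Rightarrow> real" where
  "P n x = (\<Sum>k\<le>n. real (Stirling n k) * harm k * ff x k)"

lemma P_Suc: "P (Suc n) x = x * P n x + Q n x"
proof -
  have "P (Suc n) x = (\<Sum>k\<le>n. real (Stirling (Suc n) (Suc k)) * harm (Suc k) * ff x (Suc k))"
    unfolding P_def by (simp only: sum.atMost_Suc_shift) simp
  also have "\<dots> = (\<Sum>k\<le>n. real (Suc k) * real (Stirling n (Suc k)) * harm (Suc k) * ff x (Suc k))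
        + (\<Sum>k\<le>n. real (Stirling n k) * harm (Suc k) * ff x (Suc k))"
    by (simp add: sum.distrib algebra_simps)
  also have "(\<Sum>k\<le>n. real (Suc k) * real (Stirling n (Suc k)) * harm (Suc k) * ff x (Suc k))
      = (\<Sum>k\<le>Suc n. real k * real (Stirling n k) * harm k * ff x k)"
    by (simp only: sum.atMost_Suc_shift)
  also have "\<dots> = (\<Sum>k\<le>n. real k * real (Stirling n k) * harm k * ff x k)"
    by simp
  also have "(\<Sum>k\<le>n. real k * real (Stirling n k) * harm k * ff x k) + (\<Sum>k\<le>n. real (Stirling n k) * harm (Suc k) * ff x (Suc k))
     = (\<Sum>k\<le>n. x * (real (Stirling n k) * harm k * ff x k)) + Q n x"
    unfolding Q_def sum.distrib[symmetric]
  proof (rule sum.cong[OF refl])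
    fix k
    show "real k * real (Stirling n k) * harm k * ff x k + real (Stirling n k) * harm (Suc k) * ff x (Suc k) =
         x * (real (Stirling n k) * harm k * ff x k) + real (Stirling n k) * ff x (Suc k) / real (Suc k)"
      unfolding harm_Suc ff_Suc[of x k] by (simp add: field_simps)
  qed
  also have "\<dots> = x * P n x + Q n x" by (simp add: P_def sum_distrib_left)
  finally show ?thesis .
qed

lemma F_expand: "F n x = (\<Sum>i\<le>n. real (Suc n choose i) * bernoulli_num i * x ^ (Suc n - i) / real (Suc n))"
proof -
  have b0: "bpoly (Suc n) 0 = bernoulli_num (Suc n)"
    by (simp add: bpoly_def sum.atMost_Suc) (intro sum.neutral ballI, simp)
  have "bpoly (Suc n) x = (\<Sum>i\<le>n. real (Suc n choose i) * bernoulli_num i * x ^ (Suc n - i)) + bernoulli_num (Suc n)"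
    by (simp add: bpoly_def del: binomial_Suc_Suc)
  thus ?thesis by (simp add: F_def b0 sum_divide_distrib)
qed

definition Pc :: "nat \<Rightarrow> real \<Rightarrow> real" where
  "Pc n x = harm n * x ^ n + (\<Sum>i<n. bernoulli_num (Suc i) * (real (n choose Suc i) - 1) / real (Suc i) * x ^ (n - Suc i))"

lemma P_closed: "P n x = Pc n x"
proof (induction n)
  case 0 thus ?case by (simp add: P_def Pc_def harm_def)
next
  case (Suc n)
  have "P (Suc n) x = x * Pc n x + F n x" by (simp add: P_Suc Suc.IH Q_eq_F)
  also have "F n x = x ^ Suc n / real (Suc n) + (\<Sum>i<n. real (Suc n choose Suc i) * bernoulli_num (Suc i) * x ^ (n - i) / real (Suc n))"
    unfolding F_expand lessThan_Suc_atMost[symmetric] sum.lessThan_Suc_shift by (simp add: bern0)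
  also have "x * Pc n x + (x ^ Suc n / real (Suc n) + (\<Sum>i<n. real (Suc n choose Suc i) * bernoulli_num (Suc i) * x ^ (n - i) / real (Suc n)))
     = Pc (Suc n) x"
  proof -
    have "x * Pc n x = harm n * x ^ Suc n + (\<Sum>i<n. bernoulli_num (Suc i) * (real (n choose Suc i) - 1) / real (Suc i) * x ^ (n - i))"
      unfolding Pc_def distrib_left sum_distrib_left
    proof (intro arg_cong2[where f="(+)"] sum.cong refl)
      show "x * (harm n * x ^ n) = harm n * x ^ Suc n" by simp
    next
      fix i assume "i \<in> {..<n}"
      hence "x * x ^ (n - Suc i) = x ^ (n - i)"
        by (metis Suc_diff_Suc lessThan_iff power_Suc)
      thus "x * (bernoulli_num (Suc i) * (real (n choose Suc i) - 1) / real (Suc i) * x ^ (n - Suc i)) =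
         bernoulli_num (Suc i) * (real (n choose Suc i) - 1) / real (Suc i) * x ^ (n - i)"
      proof -
        have "x * (c * x ^ (n - Suc i)) = c * (x * x ^ (n - Suc i))" for c by (simp only: ac_simps)
        thus ?thesis using \<open>x * x ^ (n - Suc i) = x ^ (n - i)\<close> by simp
      qed
    qed
    moreover have "Pc (Suc n) x = harm (Suc n) * x ^ Suc n + (\<Sum>i<n. bernoulli_num (Suc i) * (real (Suc n choose Suc i) - 1) / real (Suc i) * x ^ (n - i))"
      unfolding Pc_def by (simp del: binomial_Suc_Suc)
    moreover have "(\<Sum>i<n. bernoulli_num (Suc i) * (real (n choose Suc i) - 1) / real (Suc i) * x ^ (n - i))
        + (\<Sum>i<n. real (Suc n choose Suc i) * bernoulli_num (Suc i) * x ^ (n - i) / real (Suc n))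
        = (\<Sum>i<n. bernoulli_num (Suc i) * (real (Suc n choose Suc i) - 1) / real (Suc i) * x ^ (n - i))"
      unfolding sum.distrib[symmetric]
    proof (rule sum.cong[OF refl])
      fix i
      have e1: "real (Suc n choose Suc i) / real (Suc n) = real (n choose i) / real (Suc i)"
      proof -
        have "real (Suc i) * real (Suc n choose Suc i) = real (Suc n) * real (n choose i)"
          using arg_cong[OF Suc_times_binomial[of i n], of real] by (simp only: of_nat_mult)
        thus ?thesis by (simp add: field_simps del: binomial_Suc_Suc of_nat_Suc)
      qed
      have e2: "real (Suc n choose Suc i) = real (n choose i) + real (n choose Suc i)" by simp
      show "bernoulli_num (Suc i) * (real (n choose Suc i) - 1) / real (Suc i) * x ^ (n - i) +
          real (Suc n choose Suc i) * bernoulli_num (Suc i) * x ^ (n - i) / real (Suc n) =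
          bernoulli_num (Suc i) * (real (Suc n choose Suc i) - 1) / real (Suc i) * x ^ (n - i)"
      proof -
        have "real (Suc n choose Suc i) * bernoulli_num (Suc i) * x ^ (n - i) / real (Suc n)
           = bernoulli_num (Suc i) * x ^ (n - i) * (real (Suc n choose Suc i) / real (Suc n))"
          by (simp only: times_divide_eq_right ac_simps)
        also have "\<dots> = bernoulli_num (Suc i) * x ^ (n - i) * (real (n choose i) / real (Suc i))"
          by (simp only: e1)
        finally have h: "real (Suc n choose Suc i) * bernoulli_num (Suc i) * x ^ (n - i) / real (Suc n)
           = bernoulli_num (Suc i) * x ^ (n - i) * (real (n choose i) / real (Suc i))" .
        have alg: "b * (c - 1) / d * y + b * y * (a / d) = b * ((a + c) - 1) / d * y" for a b c d y :: real
          by (simp add: field_simps add_divide_distrib diff_divide_distrib)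
        show ?thesis unfolding h unfolding e2 by (rule alg)
      qed
    qed
    moreover have aux: "xp = h * y + s1 \<Longrightarrow> pc = (h + inverse d) * y + s3 \<Longrightarrow> s1 + s2 = s3 \<Longrightarrow> xp + (y / d + s2) = pc"
      for xp h y s1 pc d s3 s2 :: real by (simp add: divide_inverse algebra_simps)
    ultimately show ?thesis unfolding harm_Suc by blast
  qed
  finally show ?case .
qed



lemma int_pow: "((\<lambda>x::real. x ^ m) has_integral (1 / real (Suc m))) {0..1}"
proof -
  have d: "((\<lambda>x. x ^ Suc m / real (Suc m)) has_vector_derivative x ^ m) (at x within {0..1})" for x :: real
  proof -
    have "((\<lambda>x. x ^ Suc m) has_real_derivative real (Suc m) * x ^ (Suc m - Suc 0)) (at x)"
      by (rule DERIV_pow)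
    hence "((\<lambda>x. x ^ Suc m / real (Suc m)) has_real_derivative real (Suc m) * x ^ (Suc m - Suc 0) / real (Suc m)) (at x)"
      by (rule DERIV_cdivide)
    moreover have "real (Suc m) * x ^ (Suc m - Suc 0) / real (Suc m) = x ^ m"
      by simp
    ultimately have "((\<lambda>x. x ^ Suc m / real (Suc m)) has_real_derivative x ^ m) (at x)" by simp
    hence "((\<lambda>x. x ^ Suc m / real (Suc m)) has_real_derivative x ^ m) (at x within {0..1})"
      by (rule has_field_derivative_at_within)
    thus ?thesis by (simp add: has_real_derivative_iff_has_vector_derivative)
  qed
  have "((\<lambda>x::real. x ^ m) has_integral ((\<lambda>x. x ^ Suc m / real (Suc m)) 1 - (\<lambda>x. x ^ Suc m / real (Suc m)) 0)) {0..1}"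
    by (rule fundamental_theorem_of_calculus) (simp, rule d)
  thus ?thesis by simp
qed

lemma ff_int: "((\<lambda>x. ff x k) has_integral cauchy1 k) {0..1}"
proof -
  have "continuous_on {0..1} (\<lambda>x. ff x k)" unfolding ff_def by (intro continuous_intros)
  hence "(\<lambda>x. ff x k) integrable_on {0..1}" by (rule integrable_continuous_interval)
  hence "((\<lambda>x. ff x k) has_integral integral {0..1} (\<lambda>x. ff x k)) {0..1}" by (rule integrable_integral)
  thus ?thesis by (simp add: cauchy1_def ff_def)
qed

lemma P_int: "(P n has_integral (\<Sum>k\<le>n. real (Stirling n k) * harm k * cauchy1 k)) {0..1}"
proof -
  have "((\<lambda>x. real (Stirling n k) * harm k * ff x k) has_integral (real (Stirling n k) * harm k * cauchy1 k)) {0..1}" for k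
    using has_integral_mult_right[OF ff_int[of k], of "real (Stirling n k) * harm k"] by simp
  hence "((\<lambda>x. \<Sum>k\<le>n. real (Stirling n k) * harm k * ff x k) has_integral (\<Sum>k\<le>n. real (Stirling n k) * harm k * cauchy1 k)) {0..1}"
    by (intro has_integral_sum) auto
  thus ?thesis unfolding P_def[abs_def] .
qed

lemma Pc_int: "(Pc n has_integral (harm n / real (Suc n) +
   (\<Sum>i<n. bernoulli_num (Suc i) * (real (n choose Suc i) - 1) / real (Suc i) / real (n - i)))) {0..1}"
proof -
  have "((\<lambda>x. harm n * x ^ n + (\<Sum>i<n. bernoulli_num (Suc i) * (real (n choose Suc i) - 1) / real (Suc i) * x ^ (n - Suc i)))
     has_integral (harm n * (1 / real (Suc n)) +
   (\<Sum>i<n. bernoulli_num (Suc i) * (real (n choose Suc i) - 1) / real (Suc i) * (1 / real (Suc (n - Suc i)))))) {0..1}"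
  proof (rule has_integral_add)
    show "((\<lambda>x. harm n * x ^ n) has_integral harm n * (1 / real (Suc n))) {0..1}"
      by (rule has_integral_mult_right[OF int_pow])
    have "((\<lambda>x. bernoulli_num (Suc i) * (real (n choose Suc i) - 1) / real (Suc i) * x ^ (n - Suc i)) has_integral
        (bernoulli_num (Suc i) * (real (n choose Suc i) - 1) / real (Suc i) * (1 / real (Suc (n - Suc i))))) {0..1}" for i
      by (rule has_integral_mult_right[OF int_pow])
    note h = this
    show "((\<lambda>x. \<Sum>i<n. bernoulli_num (Suc i) * (real (n choose Suc i) - 1) / real (Suc i) * x ^ (n - Suc i)) has_integral
     (\<Sum>i<n. bernoulli_num (Suc i) * (real (n choose Suc i) - 1) / real (Suc i) * (1 / real (Suc (n - Suc i))))) {0..1}"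
      by (rule has_integral_sum[OF finite_lessThan h])
  qed
  moreover have "(\<Sum>i<n. bernoulli_num (Suc i) * (real (n choose Suc i) - 1) / real (Suc i) * (1 / real (Suc (n - Suc i))))
     = (\<Sum>i<n. bernoulli_num (Suc i) * (real (n choose Suc i) - 1) / real (Suc i) / real (n - i))"
    by (intro sum.cong refl) (simp add: Suc_diff_Suc)
  ultimately show ?thesis unfolding Pc_def[abs_def] by simp
qed

lemma T_id: "(\<Sum>i<n. bernoulli_num (Suc i) * (real (Suc n choose Suc i) - 1) / real (Suc i)) = 1 - harm (Suc n)"
proof (induction n)
  case 0 thus ?case by (simp add: harm_def)
next
  case (Suc n)
  have step: "(\<Sum>i<Suc n. bernoulli_num (Suc i) * (real (Suc (Suc n) choose Suc i) - 1) / real (Suc i))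
     - (\<Sum>i<n. bernoulli_num (Suc i) * (real (Suc n choose Suc i) - 1) / real (Suc i))
     = - 1 / real (Suc (Suc n))"
  proof -
    have "(\<Sum>i<Suc n. bernoulli_num (Suc i) * (real (Suc (Suc n) choose Suc i) - 1) / real (Suc i))
     - (\<Sum>i<n. bernoulli_num (Suc i) * (real (Suc n choose Suc i) - 1) / real (Suc i))
     = (\<Sum>i<Suc n. bernoulli_num (Suc i) * (real (Suc (Suc n) choose Suc i) - 1) / real (Suc i))
     - (\<Sum>i<Suc n. bernoulli_num (Suc i) * (real (Suc n choose Suc i) - 1) / real (Suc i))"
      by (simp del: binomial_Suc_Suc)
    also have "\<dots> = (\<Sum>i<Suc n. bernoulli_num (Suc i) * real (Suc n choose i) / real (Suc i))"
      unfolding sum_subtractf[symmetric]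
    proof (intro sum.cong refl)
      fix i
      have alg: "b * ((c + d) - 1) / s - b * (d - 1) / s = b * c / s" for b c d s :: real
        by (simp add: diff_divide_distrib[symmetric] algebra_simps)
      show "bernoulli_num (Suc i) * (real (Suc (Suc n) choose Suc i) - 1) / real (Suc i) -
         bernoulli_num (Suc i) * (real (Suc n choose Suc i) - 1) / real (Suc i) =
         bernoulli_num (Suc i) * real (Suc n choose i) / real (Suc i)"
        by (simp only: binomial_Suc_Suc[of "Suc n" i] of_nat_add alg)
    qed
    also have "\<dots> = (\<Sum>i<Suc n. real (Suc (Suc n) choose Suc i) * bernoulli_num (Suc i)) / real (Suc (Suc n))"
      unfolding sum_divide_distrib
    proof (intro sum.cong refl)
      fix i
      have "real (Suc i) * real (Suc (Suc n) choose Suc i) = real (Suc (Suc n)) * real (Suc n choose i)"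
        using arg_cong[OF Suc_times_binomial[of i "Suc n"], of real] by (simp only: of_nat_mult)
      thus "bernoulli_num (Suc i) * real (Suc n choose i) / real (Suc i) =
         real (Suc (Suc n) choose Suc i) * bernoulli_num (Suc i) / real (Suc (Suc n))"
        by (simp add: field_simps del: binomial_Suc_Suc of_nat_Suc)
    qed
    also have "(\<Sum>i<Suc n. real (Suc (Suc n) choose Suc i) * bernoulli_num (Suc i)) = -1"
    proof -
      have "(\<Sum>j\<le>Suc n. real (Suc (Suc n) choose j) * bernoulli_num j) = 0"
        by (rule bern_rec) simp
      hence "1 + (\<Sum>i<Suc n. real (Suc (Suc n) choose Suc i) * bernoulli_num (Suc i)) = 0"
        unfolding lessThan_Suc_atMost[symmetric] sum.lessThan_Suc_shift by (simp add: bern0 del: binomial_Suc_Suc)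
      thus ?thesis by simp
    qed
    finally show ?thesis by simp
  qed
  show ?case using step Suc.IH harm_Suc[of "Suc n", where 'a=real] by (simp add: divide_inverse)
qed

lemma final_alg:
  "(\<Sum>j=0..n. bernoulli_num j / real (n - j + 1)) = 1 - real (n + 1) * (harm n / real (Suc n) +
   (\<Sum>i<n. bernoulli_num (Suc i) * (real (n choose Suc i) - 1) / real (Suc i) / real (n - i)))"
proof -
  have L: "(\<Sum>j=0..n. bernoulli_num j / real (n - j + 1)) = 1 / real (Suc n) + (\<Sum>i<n. bernoulli_num (Suc i) / real (n - i))"
    unfolding atLeast0AtMost lessThan_Suc_atMost[symmetric] sum.lessThan_Suc_shift by (simp add: bern0)
  have R: "real (n + 1) * (\<Sum>i<n. bernoulli_num (Suc i) * (real (n choose Suc i) - 1) / real (Suc i) / real (n - i))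
    = (\<Sum>i<n. bernoulli_num (Suc i) * (real (Suc n choose Suc i) - 1) / real (Suc i)) - (\<Sum>i<n. bernoulli_num (Suc i) / real (n - i))"
    unfolding sum_distrib_left sum_subtractf[symmetric]
  proof (intro sum.cong refl)
    fix i assume "i \<in> {..<n}"
    hence i: "i < n" by simp
    have "(Suc n - Suc i) * (Suc n choose Suc i) = Suc n * (n choose Suc i)"
      using binomial_absorb_comp[of "Suc n" "Suc i"] by simp
    hence c: "real (n - i) * real (Suc n choose Suc i) = real (Suc n) * real (n choose Suc i)"
      using arg_cong[of _ _ real] by (metis diff_Suc_Suc of_nat_mult)
    have ni: "real (n - i) \<noteq> 0" using i by simp
    have "real (n + 1) * (bernoulli_num (Suc i) * (real (n choose Suc i) - 1) / real (Suc i) / real (n - i))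
      = bernoulli_num (Suc i) * (real (Suc n) * real (n choose Suc i) - real (Suc n)) / (real (Suc i) * real (n - i))"
      by (simp add: field_simps)
    also have "\<dots> = bernoulli_num (Suc i) * (real (n - i) * real (Suc n choose Suc i) - (real (n - i) + real (Suc i))) / (real (Suc i) * real (n - i))"
      unfolding c using i by (simp add: of_nat_diff)
    also have "\<dots> = bernoulli_num (Suc i) * (real (Suc n choose Suc i) - 1) / real (Suc i) - bernoulli_num (Suc i) / real (n - i)"
      using ni by (simp add: field_simps del: binomial_Suc_Suc of_nat_Suc)
    finally show "real (n + 1) * (bernoulli_num (Suc i) * (real (n choose Suc i) - 1) / real (Suc i) / real (n - i))
      = bernoulli_num (Suc i) * (real (Suc n choose Suc i) - 1) / real (Suc i) - bernoulli_num (Suc i) / real (n - i)" .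
  qed
  have H: "real (n + 1) * (harm n / real (Suc n)) = harm n" by simp
  show ?thesis unfolding L distrib_left R H T_id harm_Suc
    by (simp add: divide_inverse)
qed


theorem mainTheorem13:
  fixes n :: nat
  assumes "n \<ge> 2"
  shows "(\<Sum>j=0..n. bernoulli_num j / real (n - j + 1))
         = 1 - real (n + 1) * (\<Sum>k=1..n. real (Stirling n k) * cauchy1 k * harm k)"
proof -
  have e: "P n = Pc n" using P_closed by auto
  have "(\<Sum>k\<le>n. real (Stirling n k) * harm k * cauchy1 k) = harm n / real (Suc n) +
   (\<Sum>i<n. bernoulli_num (Suc i) * (real (n choose Suc i) - 1) / real (Suc i) / real (n - i))"
    using has_integral_unique[OF P_int[of n] Pc_int[of n, folded e]] .
  moreover have "(\<Sum>k\<le>n. real (Stirling n k) * harm k * cauchy1 k) = (\<Sum>k=1..n. real (Stirling n k) * cauchy1 k * harm k)"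
  proof -
    have "(\<Sum>k\<le>n. real (Stirling n k) * harm k * cauchy1 k) = (\<Sum>k=0..n. real (Stirling n k) * harm k * cauchy1 k)"
      by (simp add: atLeast0AtMost)
    also have "\<dots> = (\<Sum>k=1..n. real (Stirling n k) * harm k * cauchy1 k)"
      by (subst sum.atLeast_Suc_atMost) (auto simp: harm_def)
    finally show ?thesis by (simp add: ac_simps)
  qed
  ultimately show ?thesis using final_alg[of n] by simp
qed

end
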